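(* Consider a block-fading channel with channel power gain $h(\nu)\ge0$ (a random variable with continuous pdf) at fading state $\nu$, noise power $\sigma^2>0$, and power limits $0<P_{\rm avg}\le P_{\rm peak}$; let $\mathcal P=\{p(\nu): E_\nu[p(\nu)]\le P_{\rm avg},\ 0\le p(\nu)\le P_{\rm peak}\ \forall\nu\}$. For a feasible target $\bar Q\ge0$, consider the problem: maximize over $p(\nu)$ the quantity $E_\nu\big[\log\big(1+\frac{h(\nu)p(\nu)}{\sigma^2}\big)\big]$ subject to $E_\nu[h(\nu)p(\nu)]\ge\bar Q$ and $p\in\mathcal P$. Let $\lambda^\ast\ge0$ and $\beta^\ast\ge0$ be the optimal dual solutions associated with the harvested energy constraint and the average power constraint, respectively. Then the optimal power allocation is $p(\nu)=P_{\rm peak}$ if $h(\nu)\ge\frac{\beta^\ast}{\lambda^\ast}$, and $p(\nu)=\Big[\frac{1}{\beta^\ast-\lambda^\ast h(\nu)}-\frac{\sigma^2}{h(\nu)}\Big]_0^{P_{\rm peak}}$ otherwise, where $[x]_a^b=\max(\min(x,b),a)$.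
   Context: $\log$ is the natural logarithm. This problem models an ideal receiver that decodes information and harvests energy from the same received signal without loss. The dual variables are those of the Lagrangian $E_\nu[\log(1+h p/\sigma^2)]+\lambda(E_\nu[hp]-\bar Q)-\beta(E_\nu[p]-P_{\rm avg})$. *)

theory Defs
  imports "HOL-Probability.Probability"
begin

definition clip :: "real \<Rightarrow> real \<Rightarrow> real \<Rightarrow> real" where
  "clip a b x = max (min x b) a"

text \<open>Power allocations obeying only the peak constraint (domain of the Lagrangian).\<close>
definition peak_allocs :: "'a measure \<Rightarrow> real \<Rightarrow> ('a \<Rightarrow> real) set" where
  "peak_allocs M Ppeak =
     {p \<in> borel_measurable M. \<forall>\<nu>\<in>space M. 0 \<le> p \<nu> \<and> p \<nu> \<le> Ppeak}"

definition power_set :: "'a measure \<Rightarrow> real \<Rightarrow> real \<Rightarrow> ('a \<Rightarrow> real) set" where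
  "power_set M Pavg Ppeak =
     {p \<in> peak_allocs M Ppeak. (\<integral>\<nu>. p \<nu> \<partial>M) \<le> Pavg}"

definition rate :: "'a measure \<Rightarrow> ('a \<Rightarrow> real) \<Rightarrow> real \<Rightarrow> ('a \<Rightarrow> real) \<Rightarrow> real" where
  "rate M h \<sigma>2 p = (\<integral>\<nu>. ln (1 + h \<nu> * p \<nu> / \<sigma>2) \<partial>M)"

definition feasible_allocs ::
  "'a measure \<Rightarrow> ('a \<Rightarrow> real) \<Rightarrow> real \<Rightarrow> real \<Rightarrow> real \<Rightarrow> ('a \<Rightarrow> real) set" where
  "feasible_allocs M h Qbar Pavg Ppeak =
     {p \<in> power_set M Pavg Ppeak. (\<integral>\<nu>. h \<nu> * p \<nu> \<partial>M) \<ge> Qbar}"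

definition optimal_alloc ::
  "'a measure \<Rightarrow> ('a \<Rightarrow> real) \<Rightarrow> real \<Rightarrow> real \<Rightarrow> real \<Rightarrow> real \<Rightarrow> ('a \<Rightarrow> real) \<Rightarrow> bool" where
  "optimal_alloc M h \<sigma>2 Qbar Pavg Ppeak p \<longleftrightarrow>
     p \<in> feasible_allocs M h Qbar Pavg Ppeak \<and>
     (\<forall>q \<in> feasible_allocs M h Qbar Pavg Ppeak. rate M h \<sigma>2 q \<le> rate M h \<sigma>2 p)"

definition lagrangian ::
  "'a measure \<Rightarrow> ('a \<Rightarrow> real) \<Rightarrow> real \<Rightarrow> real \<Rightarrow> real \<Rightarrow> ('a \<Rightarrow> real) \<Rightarrow> real \<Rightarrow> real \<Rightarrow> real" where
  "lagrangian M h \<sigma>2 Qbar Pavg p lam bet =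
     rate M h \<sigma>2 p + lam * ((\<integral>\<nu>. h \<nu> * p \<nu> \<partial>M) - Qbar) - bet * ((\<integral>\<nu>. p \<nu> \<partial>M) - Pavg)"

definition dual_fun ::
  "'a measure \<Rightarrow> ('a \<Rightarrow> real) \<Rightarrow> real \<Rightarrow> real \<Rightarrow> real \<Rightarrow> real \<Rightarrow> real \<Rightarrow> real \<Rightarrow> real" where
  "dual_fun M h \<sigma>2 Qbar Pavg Ppeak lam bet =
     (SUP p \<in> peak_allocs M Ppeak. lagrangian M h \<sigma>2 Qbar Pavg p lam bet)"

definition dual_optimal ::
  "'a measure \<Rightarrow> ('a \<Rightarrow> real) \<Rightarrow> real \<Rightarrow> real \<Rightarrow> real \<Rightarrow> real \<Rightarrow> real \<Rightarrow> real \<Rightarrow> bool" where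
  "dual_optimal M h \<sigma>2 Qbar Pavg Ppeak lam bet \<longleftrightarrow>
     lam \<ge> 0 \<and> bet \<ge> 0 \<and>
     (\<forall>lam' bet'. lam' \<ge> 0 \<longrightarrow> bet' \<ge> 0 \<longrightarrow>
        dual_fun M h \<sigma>2 Qbar Pavg Ppeak lam bet \<le> dual_fun M h \<sigma>2 Qbar Pavg Ppeak lam' bet')"

end

theory Submission
  imports Defs
begin

lemma AE_h_pos:
  fixes h :: "'a \<Rightarrow> real"
  assumes h_nonneg: "\<forall>\<nu>\<in>space M. h \<nu> \<ge> 0"
    and h_pdf: "distributed M lborel h (\<lambda>x. ennreal (f x))"
  shows "AE x in M. h x > 0"
proof -
  have hm: "h \<in> measurable M lborel" and fm: "(\<lambda>x. ennreal (f x)) \<in> borel_measurable lborel"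
   and eq: "distr M lborel h = density lborel (\<lambda>x. ennreal (f x))"
    using h_pdf by (auto simp: distributed_def)
  have "AE x in density lborel (\<lambda>x. ennreal (f x)). x \<noteq> (0::real)"
    using AE_lborel_singleton[of "0::real"] by (subst AE_density[OF fm]) (auto elim: AE_mp)
  then have "AE x in distr M lborel h. x \<noteq> 0" by (simp only: eq)
  then have "AE x in M. h x \<noteq> 0" by (rule AE_distrD[OF hm])
  moreover have "AE x in M. h x \<ge> 0" using h_nonneg by (auto intro: AE_I2)
  ultimately show ?thesis by eventually_elim auto
qed

definition popt :: "real \<Rightarrow> real \<Rightarrow> real \<Rightarrow> real \<Rightarrow> real \<Rightarrow> real" where
  "popt s2 Pk l b x = (if b \<le> l * x then Pk else clip 0 Pk (1 / (b - l * x) - s2 / x))"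

definition Fobj :: "real \<Rightarrow> real \<Rightarrow> real \<Rightarrow> real \<Rightarrow> real \<Rightarrow> real" where
  "Fobj s2 l b x y = ln (1 + x * y / s2) + l * (x * y) - b * y"

lemma tangent:
  assumes "s2 > 0" "x > 0" "y \<ge> 0" "z \<ge> 0"
  shows "Fobj s2 l b x y \<le> Fobj s2 l b x z + (y - z) * (x / (s2 + x * z) + l * x - b)"
proof -
  have pz: "1 + x * z / s2 > 0" "1 + x * y / s2 > 0" using assms by (auto intro: add_pos_nonneg)
  have "ln (1 + x * y / s2) - ln (1 + x * z / s2) \<le> ((1 + x * y / s2) - (1 + x * z / s2)) / (1 + x * z / s2)"
    using ln_diff_le[OF pz(2) pz(1)] .
  also have "\<dots> = (x * (y - z) / s2) / ((s2 + x * z) / s2)"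
  proof -
    have e1: "1 + x*z/s2 = (s2+x*z)/s2" using assms by (simp add: field_simps)
    have e2: "(1 + x*y/s2) - (1+x*z/s2) = x*(y-z)/s2" using assms by (simp add: field_simps)
    show ?thesis by (subst e2, subst e1, rule refl)
  qed
  also have "\<dots> = (y - z) * (x / (s2 + x * z))"
    using assms by simp
  finally show ?thesis unfolding Fobj_def by (simp add: algebra_simps)
qed

lemma popt_range: assumes "Pk \<ge> 0" shows "0 \<le> popt s2 Pk l b x \<and> popt s2 Pk l b x \<le> Pk"
  using assms by (auto simp: popt_def clip_def)

lemma popt_max:
  assumes "s2 > 0" "x > 0" "Pk \<ge> 0" "0 \<le> y" "y \<le> Pk" "l \<ge> 0"
  shows "Fobj s2 l b x y \<le> Fobj s2 l b x (popt s2 Pk l b x)"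
proof -
  let ?z = "popt s2 Pk l b x"
  have zr: "0 \<le> ?z" "?z \<le> Pk" using popt_range[OF assms(3)] by auto
  have key: "(y - ?z) * (x / (s2 + x * ?z) + l * x - b) \<le> 0"
  proof (cases "b \<le> l * x")
    case True
    then have z: "?z = Pk" by (simp add: popt_def)
    have "x / (s2 + x * Pk) > 0" using assms by (auto intro!: divide_pos_pos add_pos_nonneg)
    then show ?thesis using z True assms by (intro mult_nonpos_nonneg) auto
  next
    case False
    define s where "s = b - l * x"
    have s: "s > 0" using False s_def by auto
    define y0 where "y0 = 1 / s - s2 / x"
    have z: "?z = max (min y0 Pk) 0" using False by (simp add: popt_def clip_def y0_def s_def)
    have D: "x / (s2 + x * w) + l * x - b = x / (s2 + x * w) - s" for w using s_def by simp
    have xy0: "s2 + x * y0 = x / s" using assms s by (simp add: y0_def field_simps)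
    show ?thesis
    proof (cases "y0 \<ge> Pk")
      case True
      then have zz: "?z = Pk" using z assms by simp
      have pos: "s2 + x * Pk > 0" using assms by (auto intro: add_pos_nonneg)
      have "s2 + x * Pk \<le> x / s" using xy0 True assms
        by (metis add_le_cancel_left mult_le_cancel_left_pos)
      then have "s * (s2 + x * Pk) \<le> x" using s by (simp add: field_simps)
      then have "s \<le> x / (s2 + x * Pk)" using pos by (simp add: field_simps)
      then show ?thesis unfolding D zz using assms by (intro mult_nonpos_nonneg) auto
    next
      case False
      show ?thesis
      proof (cases "y0 \<le> 0")
        case True
        then have zz: "?z = 0" using z assms by simp
        have "s2 \<ge> x / s" using xy0 True assms
          by (smt (verit, best) mult_nonneg_nonpos)
        then have "s2 * s \<ge> x" using s by (simp add: field_simps)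
        then have "x / s2 \<le> s" using assms by (simp add: field_simps)
        then show ?thesis unfolding D zz using assms by (intro mult_nonneg_nonpos) auto
      next
        case f2: False
        then have zz: "?z = y0" using z False by simp
        have "x / (s2 + x * y0) = s" using xy0 s assms by simp
        then show ?thesis unfolding D zz by simp
      qed
    qed
  qed
  show ?thesis using tangent[OF assms(1,2,4) zr(1), of l b] key by linarith
qed

lemma popt_alt:
  assumes "s2 > 0" "x > 0" "Pk \<ge> 0"
  shows "popt s2 Pk l b x = min Pk (max 0 (1 / max (b - l * x) (1 / (Pk + s2 / x)) - s2 / x))"
proof -
  define s0 where "s0 = 1 / (Pk + s2 / x)"
  have pk: "Pk + s2 / x > 0" using assms by (auto intro: add_nonneg_pos)
  have s0: "s0 > 0" "1 / s0 - s2 / x = Pk" using pk by (auto simp: s0_def)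
  have "popt s2 Pk l b x = min Pk (max 0 (1 / max (b - l * x) s0 - s2 / x))"
  proof (cases "b - l * x \<le> s0")
    case True
    then have m: "max (b - l * x) s0 = s0" by simp
    show ?thesis
    proof (cases "b \<le> l * x")
      case True then show ?thesis unfolding m s0(2) popt_def using assms by simp
    next
      case False
      then have sp: "b - l * x > 0" by simp
      have "1 / (b - l * x) \<ge> 1 / s0" using True sp by (intro divide_left_mono) auto
      then have "1 / (b - l * x) - s2 / x \<ge> Pk" using s0 by linarith
      then show ?thesis unfolding m s0(2) popt_def clip_def using False assms by simp
    qed
  next
    case False
    then have m: "max (b - l * x) s0 = b - l * x" and nb: "\<not> b \<le> l * x" using s0 by auto
    show ?thesis unfolding m popt_def clip_def using nb assms by (simp add: min_def max_def)
  qed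
  then show ?thesis by (simp add: s0_def)
qed

lemma popt_tendsto:
  assumes "s2 > 0" "x > 0" "Pk \<ge> 0" "l \<longlonglongrightarrow> l0" "b \<longlonglongrightarrow> b0"
  shows "(\<lambda>n. popt s2 Pk (l n) (b n) x) \<longlonglongrightarrow> popt s2 Pk l0 b0 x"
proof -
  have pk: "Pk + s2 / x > 0" using assms by (auto intro: add_nonneg_pos)
  have ne: "max (b0 - l0 * x) (1 / (Pk + s2 / x)) \<noteq> 0"
    using pk by (metis less_max_iff_disj less_numeral_extra(3) zero_less_divide_1_iff)
  show ?thesis unfolding popt_alt[OF assms(1-3)]
    by (intro tendsto_intros assms(4,5) ne)
qed

theorem proposition4p3:
  fixes M :: "'a measure" and h :: "'a \<Rightarrow> real" and f :: "real \<Rightarrow> real"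
    and \<sigma>2 Pavg Ppeak Qbar lam bet :: real
  assumes "prob_space M"
    and h_nonneg: "\<forall>\<nu>\<in>space M. h \<nu> \<ge> 0"
    and h_pdf: "distributed M lborel h (\<lambda>x. ennreal (f x))"
    and f_cont: "continuous_on {0..} f"
    and h_int: "integrable M h"
    and "\<sigma>2 > 0" and "0 < Pavg" and "Pavg \<le> Ppeak"
    and "Qbar \<ge> 0" and "feasible_allocs M h Qbar Pavg Ppeak \<noteq> {}"
    and "dual_optimal M h \<sigma>2 Qbar Pavg Ppeak lam bet"
  shows "optimal_alloc M h \<sigma>2 Qbar Pavg Ppeak
           (\<lambda>\<nu>. if bet \<le> lam * h \<nu> then Ppeak
                 else clip 0 Ppeak (1 / (bet - lam * h \<nu>) - \<sigma>2 / h \<nu>))"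
proof -
  interpret prob_space M by fact
  note s2 = \<open>\<sigma>2 > 0\<close>
  have Pk: "Ppeak > 0" using \<open>0 < Pavg\<close> \<open>Pavg \<le> Ppeak\<close> by linarith
  have hm[measurable]: "h \<in> borel_measurable M"
    using h_pdf by (auto simp: distributed_def)
  have hq: "norm (h x * y) \<le> Ppeak * h x" if "x \<in> space M" "0 \<le> y" "y \<le> Ppeak" for x y
  proof -
    have h0: "h x \<ge> 0" using h_nonneg that(1) by auto
    have "h x * y \<le> h x * Ppeak" using that h0 by (intro mult_left_mono) auto
    then show ?thesis using h0 that by (simp add: abs_mult mult.commute)
  qed
  have hpos: "AE x in M. h x > 0" using AE_h_pos[OF h_nonneg h_pdf] .
  have dopt: "lam \<ge> 0" "bet \<ge> 0"
    "\<And>l' b'. l' \<ge> 0 \<Longrightarrow> b' \<ge> 0 \<Longrightarrow> dual_fun M h \<sigma>2 Qbar Pavg Ppeak lam bet \<le> dual_fun M h \<sigma>2 Qbar Pavg Ppeak l' b'"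
    using \<open>dual_optimal M h \<sigma>2 Qbar Pavg Ppeak lam bet\<close> unfolding dual_optimal_def by auto

  define P where "P l b = (\<lambda>\<nu>. popt \<sigma>2 Ppeak l b (h \<nu>))" for l b
  define A where "A l b = (\<integral>\<nu>. h \<nu> * P l b \<nu> \<partial>M)" for l b
  define B where "B l b = (\<integral>\<nu>. P l b \<nu> \<partial>M)" for l b
  define L where "L q l b = lagrangian M h \<sigma>2 Qbar Pavg q l b" for q l b
  define g where "g l b = dual_fun M h \<sigma>2 Qbar Pavg Ppeak l b" for l b

  have Pm[measurable]: "P l b \<in> borel_measurable M" for l b
    unfolding P_def popt_def clip_def by measurable
  have Ppeak: "P l b \<in> peak_allocs M Ppeak" for l b
    using popt_range[of Ppeak] Pk Pm[of l b] by (auto simp: peak_allocs_def P_def)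

  have integ: "integrable M q" "integrable M (\<lambda>\<nu>. h \<nu> * q \<nu>)"
      "integrable M (\<lambda>\<nu>. ln (1 + h \<nu> * q \<nu> / \<sigma>2))"
    if q: "q \<in> peak_allocs M Ppeak" for q
  proof -
    have qm[measurable]: "q \<in> borel_measurable M" and qb: "\<And>\<nu>. \<nu> \<in> space M \<Longrightarrow> 0 \<le> q \<nu> \<and> q \<nu> \<le> Ppeak"
      using q by (auto simp: peak_allocs_def)
    show "integrable M q"
      by (rule integrable_const_bound[where B=Ppeak]) (use qb in \<open>auto intro!: AE_I2\<close>)
    show "integrable M (\<lambda>\<nu>. h \<nu> * q \<nu>)"
    proof (rule Bochner_Integration.integrable_bound[where f="\<lambda>\<nu>. Ppeak * h \<nu>"])
      show "integrable M (\<lambda>\<nu>. Ppeak * h \<nu>)" using h_int by simp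
      show "AE x in M. norm (h x * q x) \<le> norm (Ppeak * h x)"
      proof (rule AE_I2)
        fix x assume x: "x \<in> space M"
        show "norm (h x * q x) \<le> norm (Ppeak * h x)" using hq[OF x, of "q x"] qb[OF x] by simp
      qed
    qed simp
    show "integrable M (\<lambda>\<nu>. ln (1 + h \<nu> * q \<nu> / \<sigma>2))"
    proof (rule Bochner_Integration.integrable_bound[where f="\<lambda>\<nu>. Ppeak * h \<nu> / \<sigma>2"])
      show "integrable M (\<lambda>\<nu>. Ppeak * h \<nu> / \<sigma>2)" using h_int by simp
      show "AE x in M. norm (ln (1 + h x * q x / \<sigma>2)) \<le> norm (Ppeak * h x / \<sigma>2)"
      proof (rule AE_I2)
        fix x assume x: "x \<in> space M"
        have a0: "h x * q x / \<sigma>2 \<ge> 0" using qb[OF x] h_nonneg x s2 by auto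
        have a1: "h x * q x / \<sigma>2 \<le> Ppeak * h x / \<sigma>2"
          using qb[OF x] hq[OF x, of "q x"] h_nonneg x s2 by (intro divide_right_mono) auto
        have "ln (1 + h x * q x / \<sigma>2) \<ge> 0" using a0 by simp
        moreover have "ln (1 + h x * q x / \<sigma>2) \<le> h x * q x / \<sigma>2"
          using a0 by (intro ln_add_one_self_le_self) 
        ultimately show "norm (ln (1 + h x * q x / \<sigma>2)) \<le> norm (Ppeak * h x / \<sigma>2)"
          using a1 a0 h_nonneg x Pk s2 by simp
      qed
    qed simp
  qed

  have Lform: "L q l b = (\<integral>\<nu>. Fobj \<sigma>2 l b (h \<nu>) (q \<nu>) \<partial>M) + b * Pavg - l * Qbar"
    if q: "q \<in> peak_allocs M Ppeak" for q l b
  proof -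
    note i = integ[OF q]
    have "(\<integral>\<nu>. Fobj \<sigma>2 l b (h \<nu>) (q \<nu>) \<partial>M)
        = (\<integral>\<nu>. ln (1 + h \<nu> * q \<nu> / \<sigma>2) \<partial>M) + l * (\<integral>\<nu>. h \<nu> * q \<nu> \<partial>M) - b * (\<integral>\<nu>. q \<nu> \<partial>M)"
      unfolding Fobj_def using i by simp
    then show ?thesis
      unfolding L_def lagrangian_def rate_def by (simp add: algebra_simps)
  qed

  have Lmax: "L q l b \<le> L (P l b) l b" if q: "q \<in> peak_allocs M Ppeak" and l: "l \<ge> 0" for q l b
  proof -
    have qb: "\<And>\<nu>. \<nu> \<in> space M \<Longrightarrow> 0 \<le> q \<nu> \<and> q \<nu> \<le> Ppeak"
      using q by (auto simp: peak_allocs_def)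
    have intF: "integrable M (\<lambda>\<nu>. Fobj \<sigma>2 l b (h \<nu>) (p \<nu>))" if "p \<in> peak_allocs M Ppeak" for p
      using integ[OF that] unfolding Fobj_def by simp
    have "(\<integral>\<nu>. Fobj \<sigma>2 l b (h \<nu>) (q \<nu>) \<partial>M) \<le> (\<integral>\<nu>. Fobj \<sigma>2 l b (h \<nu>) (P l b \<nu>) \<partial>M)"
    proof (rule integral_mono_AE[OF intF[OF q] intF[OF Ppeak]])
      show "AE x in M. Fobj \<sigma>2 l b (h x) (q x) \<le> Fobj \<sigma>2 l b (h x) (P l b x)"
        using hpos
      proof (rule AE_mp, intro AE_I2 impI)
        fix x assume "x \<in> space M" "h x > 0"
        then show "Fobj \<sigma>2 l b (h x) (q x) \<le> Fobj \<sigma>2 l b (h x) (P l b x)"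
          unfolding P_def using popt_max[OF s2 _ _ _ _ l, of "h x" Ppeak "q x" b] qb Pk by auto
      qed
    qed
    then show ?thesis using Lform[OF q] Lform[OF Ppeak] by simp
  qed

  have gP: "g l b = L (P l b) l b" if "l \<ge> 0" for l b
    unfolding g_def dual_fun_def L_def[symmetric]
    by (rule cSup_eq_maximum) (use Ppeak Lmax that in auto)

  have lin: "L (P l b) l' b' = L (P l b) l b + (l' - l) * (A l b - Qbar) - (b' - b) * (B l b - Pavg)" for l b l' b'
    unfolding L_def lagrangian_def A_def B_def by (simp add: algebra_simps)

  have kkt: "0 \<le> (l' - lam) * (A l' b' - Qbar) - (b' - bet) * (B l' b' - Pavg)"
    if "l' \<ge> 0" "b' \<ge> 0" for l' b'
  proof -
    have "g lam bet \<le> g l' b'" using dopt(3)[OF that] by (simp add: g_def)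
    moreover have "L (P l' b') lam bet \<le> g lam bet"
      using gP[OF dopt(1)] Lmax[OF Ppeak dopt(1)] by simp
    moreover have "g l' b' = L (P l' b') l' b'" using gP[OF that(1)] .
    ultimately show ?thesis using lin[of l' b' lam bet] by (simp add: algebra_simps)
  qed

  have conv: "(\<lambda>n. A (l n) (b n)) \<longlonglongrightarrow> A lam bet \<and> (\<lambda>n. B (l n) (b n)) \<longlonglongrightarrow> B lam bet"
    if ll: "l \<longlonglongrightarrow> lam" and bb: "b \<longlonglongrightarrow> bet" for l b
  proof -
    have pw: "AE x in M. (\<lambda>n. P (l n) (b n) x) \<longlonglongrightarrow> P lam bet x"
      using hpos by (rule AE_mp) (auto intro!: AE_I2 simp: P_def intro: popt_tendsto[OF s2 _ _ ll bb] less_imp_le Pk)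
    have rng: "\<And>l b x. 0 \<le> P l b x \<and> P l b x \<le> Ppeak" using popt_range[of Ppeak] Pk by (simp add: P_def)
    have "(\<lambda>n. A (l n) (b n)) \<longlonglongrightarrow> A lam bet"
      unfolding A_def
    proof (rule integral_dominated_convergence[where w="\<lambda>\<nu>. Ppeak * h \<nu>"])
      show "integrable M (\<lambda>\<nu>. Ppeak * h \<nu>)" using h_int by simp
      show "AE x in M. (\<lambda>n. h x * P (l n) (b n) x) \<longlonglongrightarrow> h x * P lam bet x"
        using pw by (rule AE_mp) (auto intro!: AE_I2 tendsto_intros)
      show "AE x in M. norm (h x * P (l n) (b n) x) \<le> Ppeak * h x" for n
        using hq rng[of "l n" "b n"] by (auto intro!: AE_I2)
    qed simp_all
    moreover have "(\<lambda>n. B (l n) (b n)) \<longlonglongrightarrow> B lam bet"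
      unfolding B_def
    proof (rule integral_dominated_convergence[where w="\<lambda>\<nu>. Ppeak"])
      show "AE x in M. norm (P (l n) (b n) x) \<le> Ppeak" for n
        using rng[of "l n" "b n"] by (auto intro!: AE_I2)
    qed (use pw in simp_all)
    ultimately show ?thesis ..
  qed

  define t :: "nat \<Rightarrow> real" where "t n = inverse (real (Suc n))" for n
  have t: "t \<longlonglongrightarrow> 0" "\<And>n. t n > 0" "\<And>n. t n \<le> 1"
  proof -
    show "t \<longlonglongrightarrow> 0" unfolding t_def[abs_def] by (rule LIMSEQ_inverse_real_of_nat)
    show "t n > 0" for n by (simp add: t_def)
    show "t n \<le> 1" for n by (simp add: t_def field_simps)
  qed

  have tp: "(\<lambda>n. c + t n) \<longlonglongrightarrow> c" for c
    using tendsto_add[OF tendsto_const t(1), of c] by simp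
  have tm: "(\<lambda>n. c - c * t n) \<longlonglongrightarrow> c" for c
    using tendsto_diff[OF tendsto_const tendsto_mult[OF tendsto_const t(1)], of c c] by simp
  have Age: "A lam bet \<ge> Qbar"
  proof -
    have c: "(\<lambda>n. A (lam + t n) bet) \<longlonglongrightarrow> A lam bet"
      using conv[of "\<lambda>n. lam + t n" "\<lambda>n. bet"] tp by auto
    have "A (lam + t n) bet \<ge> Qbar" for n
    proof -
      have "0 \<le> t n * (A (lam + t n) bet - Qbar)"
        using kkt[of "lam + t n" bet] dopt t(2)[of n] by simp
      then show ?thesis using t(2)[of n] by (simp add: zero_le_mult_iff)
    qed
    then show ?thesis using c by (intro LIMSEQ_le_const) auto
  qed
  have Ale: "A lam bet \<le> Qbar" if "lam > 0"
  proof -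
    have c: "(\<lambda>n. A (lam - lam * t n) bet) \<longlonglongrightarrow> A lam bet"
      using conv[of "\<lambda>n. lam - lam * t n" "\<lambda>n. bet"] tm by auto
    have "A (lam - lam * t n) bet \<le> Qbar" for n
    proof -
      have nn: "lam - lam * t n \<ge> 0" using t(3)[of n] that
        by (metis diff_ge_0_iff_ge less_eq_real_def mult.right_neutral mult_left_mono)
      have "0 \<le> - (lam * t n) * (A (lam - lam * t n) bet - Qbar)"
        using kkt[OF nn dopt(2)] by simp
      moreover have "lam * t n > 0" using t(2)[of n] that by simp
      ultimately show ?thesis
        using t(2)[of n] that by (auto simp: mult_le_0_iff)
    qed
    then show ?thesis using c by (intro LIMSEQ_le_const2) auto
  qed
  have Ble: "B lam bet \<le> Pavg"
  proof -
    have c: "(\<lambda>n. B lam (bet + t n)) \<longlonglongrightarrow> B lam bet"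
      using conv[of "\<lambda>n. lam" "\<lambda>n. bet + t n"] tp by auto
    have "B lam (bet + t n) \<le> Pavg" for n
    proof -
      have "0 \<le> - t n * (B lam (bet + t n) - Pavg)"
        using kkt[of lam "bet + t n"] dopt t(2)[of n] by simp
      then show ?thesis using t(2)[of n] by (auto simp: mult_le_0_iff)
    qed
    then show ?thesis using c by (intro LIMSEQ_le_const2) auto
  qed
  have Bge: "B lam bet \<ge> Pavg" if "bet > 0"
  proof -
    have c: "(\<lambda>n. B lam (bet - bet * t n)) \<longlonglongrightarrow> B lam bet"
      using conv[of "\<lambda>n. lam" "\<lambda>n. bet - bet * t n"] tm by auto
    have "B lam (bet - bet * t n) \<ge> Pavg" for n
    proof -
      have nn: "bet - bet * t n \<ge> 0" using t(3)[of n] that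
        by (metis diff_ge_0_iff_ge less_eq_real_def mult.right_neutral mult_left_mono)
      have "0 \<le> (bet * t n) * (B lam (bet - bet * t n) - Pavg)"
        using kkt[OF dopt(1) nn] by simp
      moreover have "bet * t n > 0" using t(2)[of n] that by simp
      ultimately show ?thesis
        using t(2)[of n] that by (auto simp: zero_le_mult_iff)
    qed
    then show ?thesis using c by (intro LIMSEQ_le_const) auto
  qed

  have cs1: "lam * (A lam bet - Qbar) = 0"
    using Age Ale dopt(1) by (cases "lam > 0") auto
  have cs2: "bet * (B lam bet - Pavg) = 0"
    using Ble Bge dopt(2) by (cases "bet > 0") auto

  have eqP: "(\<lambda>\<nu>. if bet \<le> lam * h \<nu> then Ppeak
                 else clip 0 Ppeak (1 / (bet - lam * h \<nu>) - \<sigma>2 / h \<nu>)) = P lam bet"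
    by (simp add: P_def popt_def fun_eq_iff)
  have feas: "P lam bet \<in> feasible_allocs M h Qbar Pavg Ppeak"
    using Ppeak Age Ble by (simp add: feasible_allocs_def power_set_def A_def B_def)
  show ?thesis unfolding eqP optimal_alloc_def
  proof (intro conjI ballI feas)
    fix q assume q: "q \<in> feasible_allocs M h Qbar Pavg Ppeak"
    then have qp: "q \<in> peak_allocs M Ppeak" and qE: "(\<integral>\<nu>. h \<nu> * q \<nu> \<partial>M) \<ge> Qbar"
      and qB: "(\<integral>\<nu>. q \<nu> \<partial>M) \<le> Pavg"
      by (auto simp: feasible_allocs_def power_set_def)
    have "rate M h \<sigma>2 q \<le> L q lam bet"
      unfolding L_def lagrangian_def using qE qB dopt(1,2)
      by (simp add: order_trans[OF mult_nonneg_nonpos mult_nonneg_nonneg])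
    also have "\<dots> \<le> L (P lam bet) lam bet" by (rule Lmax[OF qp dopt(1)])
    also have "\<dots> = rate M h \<sigma>2 (P lam bet)"
      unfolding L_def lagrangian_def using cs1 cs2 unfolding A_def B_def by linarith
    finally show "rate M h \<sigma>2 q \<le> rate M h \<sigma>2 (P lam bet)" .
  qed
qed

end
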